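(* Let $m,n,k$ be positive integers, $A\in\mathbb{R}^{m\times n}$, $x^*\in\mathbb{R}^n$ with support $S^*=\{i:x^*_i\neq0\}$ satisfying $1\le|S^*|\le k$, and $y=Ax^*$ (noiseless case, $e=0$). Assume $A$ satisfies the $(2k+1)$-RIP, that $\|A_i\|_2=1$ for every column $A_i$ of $A$, and that there exists $\beta\in(0,1)$ with $$\frac{2k\,\alpha_k^{RIP}\|x^*\|_2}{\min_{i\in S^*}|x^*_i|}\le\beta .$$ Then $x^*$ satisfies $\gamma_k^{RIP}\|e\|_2<\frac{\min_{i\in S^*}|x^*_i|}{2k}-\alpha_k^{RIP}\|x^*\|_2$ (with $e=0$). As a consequence, for the initialization $\mathcal{X}^0=0$ and every $\eta>0$, if SEA is run for $N>\frac{k+1}{1-\beta}$ iterations, then $S^*\subseteq S^{t_{BEST}}$ and $x^{t_{BEST}}=x^*$.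
   Context: For $l\in\{1,\dots,n\}$, the restricted isometry constant $\delta_l$ of $A$ is the smallest $\delta\ge0$ such that $(1-\delta)\|x\|_2^2\le\|Ax\|_2^2\le(1+\delta)\|x\|_2^2$ for all $x\in\mathbb{R}^n$ with at most $l$ nonzero entries; $A$ satisfies the $l$-RIP if $\delta_l<1$. Define $\alpha_k^{RIP}=\delta_{2k+1}\left(1+\frac{\delta_{2k}}{1-\delta_k}\right)$ and $\gamma_k^{RIP}=1+\frac{\delta_{2k+1}\sqrt{1+\delta_k}}{1-\delta_k}$. For $v\in\mathbb{R}^n$, $\mathrm{largest}_k(v)$ is the set of indices of the $k$ entries of $v$ with largest absolute value (ties broken by selecting the highest indices). For $S\subseteq\{1,\dots,n\}$, $A_S$ is the submatrix of columns indexed by $S$, $v_S$ the restriction of a vector to $S$, and $A_S^\dagger$ the Moore–Penrose pseudoinverse of $A_S$. The Support Exploration Algorithm (SEA) with initialization $\mathcal{X}^0$ and step size $\eta>0$ generates, for $t=0,1,2,\dots$: $S^t=\mathrm{largest}_k(\mathcal{X}^t)$; $x^t_i=0$ for $i\notin S^t$ and $x^t_{S^t}=A_{S^t}^\dagger y$; $\mathcal{X}^{t+1}=\mathcal{X}^t-\eta A^T(Ax^t-y)$. When run for $N$ iterations (computing $x^0,\dots,x^{N-1}$), SEA outputs $x^{t_{BEST}}$ with $t_{BEST}\in\arg\min_{t'\in\{0,\dots,N-1\}}\|Ax^{t'}-y\|_2$. *)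

theory Defs
  imports "HOL-Analysis.Analysis"
begin

text \<open>Matrices A in R^{m x n} are rendered as real^'n^'m (A$i$j = row i, column j);
  the column index type 'n carries a linear order used for tie breaking in largest_k.\<close>

definition supp :: "real^'n \<Rightarrow> 'n set" where
  "supp x = {i. x $ i \<noteq> 0}"

definition ric :: "real^'n^'m \<Rightarrow> nat \<Rightarrow> real" where
  "ric A l = Inf {\<delta>. \<delta> \<ge> 0 \<and> (\<forall>x::real^'n. card (supp x) \<le> l \<longrightarrow>
       (1 - \<delta>) * (norm x)^2 \<le> (norm (A *v x))^2 \<and>
       (norm (A *v x))^2 \<le> (1 + \<delta>) * (norm x)^2)}"

definition has_RIP :: "real^'n^'m \<Rightarrow> nat \<Rightarrow> bool" where
  "has_RIP A l \<longleftrightarrow> ric A l < 1"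

definition alpha_RIP :: "real^'n^'m \<Rightarrow> nat \<Rightarrow> real" where
  "alpha_RIP A k = ric A (2*k+1) * (1 + ric A (2*k) / (1 - ric A k))"

definition gamma_RIP :: "real^'n^'m \<Rightarrow> nat \<Rightarrow> real" where
  "gamma_RIP A k = 1 + ric A (2*k+1) * sqrt (1 + ric A k) / (1 - ric A k)"

text \<open>largest_k v: indices of the k entries of largest absolute value, ties broken
  by choosing the higher index.\<close>
definition largest :: "nat \<Rightarrow> real^('n::{finite,linorder}) \<Rightarrow> 'n set" where
  "largest k v = {i. card {j. \<bar>v$j\<bar> > \<bar>v$i\<bar> \<or> (\<bar>v$j\<bar> = \<bar>v$i\<bar> \<and> j > i)} < k}"

definition pinv :: "real^'n^'m \<Rightarrow> real^'m^'n" where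
  "pinv M = (THE X. M ** X ** M = M \<and> X ** M ** X = X \<and>
                    transpose (M ** X) = M ** X \<and> transpose (X ** M) = X ** M)"

text \<open>A_S embedded as an m x n matrix whose columns outside S are zero. Then
  pinv (restr_cols A S) *v y is the vector that is 0 outside S and equals
  A_S^dagger y on S.\<close>
definition restr_cols :: "real^'n^'m \<Rightarrow> 'n set \<Rightarrow> real^'n^'m" where
  "restr_cols A S = (\<chi> i j. if j \<in> S then A$i$j else 0)"

definition sea_xt :: "real^('n::{finite,linorder})^'m \<Rightarrow> real^'m \<Rightarrow> nat \<Rightarrow> real^('n::{finite,linorder}) \<Rightarrow> real^('n::{finite,linorder})" where
  "sea_xt A y k X = pinv (restr_cols A (largest k X)) *v y"

primrec sea_X :: "real^('n::{finite,linorder})^'m \<Rightarrow> real^'m \<Rightarrow> nat \<Rightarrow> real \<Rightarrow> real^('n::{finite,linorder}) \<Rightarrow> nat \<Rightarrow> real^('n::{finite,linorder})" where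
  "sea_X A y k \<eta> X0 0 = X0"
| "sea_X A y k \<eta> X0 (Suc t) =
     sea_X A y k \<eta> X0 t - \<eta> *\<^sub>R (transpose A *v (A *v sea_xt A y k (sea_X A y k \<eta> X0 t) - y))"

definition sea_S :: "real^('n::{finite,linorder})^'m \<Rightarrow> real^'m \<Rightarrow> nat \<Rightarrow> real \<Rightarrow> real^('n::{finite,linorder}) \<Rightarrow> nat \<Rightarrow> 'n set" where
  "sea_S A y k \<eta> X0 t = largest k (sea_X A y k \<eta> X0 t)"

definition sea_x :: "real^('n::{finite,linorder})^'m \<Rightarrow> real^'m \<Rightarrow> nat \<Rightarrow> real \<Rightarrow> real^('n::{finite,linorder}) \<Rightarrow> nat \<Rightarrow> real^('n::{finite,linorder})" where
  "sea_x A y k \<eta> X0 t = sea_xt A y k (sea_X A y k \<eta> X0 t)"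

end

theory Submission
  imports Defs
begin


lemma pinv_uniq:
  fixes M :: "real^'n^'m"
  assumes "M ** X ** M = M" "X ** M ** X = X" "transpose (M ** X) = M ** X" "transpose (X ** M) = X ** M"
    and "M ** Y ** M = M" "Y ** M ** Y = Y" "transpose (M ** Y) = M ** Y" "transpose (Y ** M) = Y ** M"
  shows "X = Y"
proof -
  have tM: "transpose M = transpose M ** transpose Y ** transpose M"
    by (metis assms(5) matrix_transpose_mul matrix_mul_assoc)
  have tM2: "transpose M = transpose M ** transpose X ** transpose M"
    by (metis assms(1) matrix_transpose_mul matrix_mul_assoc)
  have "X = X ** (M ** X)" using assms(2) by (simp add: matrix_mul_assoc)
  also have "\<dots> = X ** (transpose X ** transpose M)" by (metis assms(3) matrix_transpose_mul)
  also have "\<dots> = X ** transpose X ** (transpose M ** transpose Y ** transpose M)"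
    using tM by (metis matrix_mul_assoc)
  also have "\<dots> = X ** (transpose X ** transpose M) ** (transpose Y ** transpose M)"
    by (simp add: matrix_mul_assoc)
  also have "\<dots> = X ** (M ** X) ** (M ** Y)"
    by (metis assms(3,7) matrix_transpose_mul)
  also have "\<dots> = (X ** M ** X) ** M ** Y" by (simp add: matrix_mul_assoc)
  finally have X: "X = X ** M ** Y" using assms(2) by simp
  have "Y = (Y ** M) ** Y" using assms(6) by (simp add: matrix_mul_assoc)
  also have "\<dots> = (transpose M ** transpose Y) ** Y" by (metis assms(8) matrix_transpose_mul)
  also have "\<dots> = (transpose M ** transpose X ** transpose M) ** transpose Y ** Y"
    using tM2 by (metis matrix_mul_assoc)
  also have "\<dots> = (transpose M ** transpose X) ** (transpose M ** transpose Y) ** Y"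
    by (simp add: matrix_mul_assoc)
  also have "\<dots> = (X ** M) ** (Y ** M) ** Y"
    by (metis assms(4,8) matrix_transpose_mul)
  also have "\<dots> = X ** M ** (Y ** M ** Y)" by (simp add: matrix_mul_assoc)
  finally have "Y = X ** M ** Y" using assms(6) by simp
  with X show ?thesis by simp
qed



definition rs :: "'n set \<Rightarrow> real^'n \<Rightarrow> real^'n" where
  "rs S v = (\<chi> j. if j \<in> S then v$j else 0)"

lemma rs_idem[simp]: "rs S (rs S v) = rs S v"
  by (simp add: rs_def vec_eq_iff)

lemma restr_mv: "restr_cols A S *v v = A *v rs S v"
  unfolding restr_cols_def rs_def matrix_vector_mult_def
  by (simp add: vec_eq_iff; intro allI sum.cong; auto)

lemma restr_tmv: "(transpose (restr_cols A S) *v w) $ j = (if j \<in> S then (transpose A *v w) $ j else 0)"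
  unfolding restr_cols_def transpose_def matrix_vector_mult_def by simp

lemma inner_transpose: "x \<bullet> (transpose M *v z) = (M *v x) \<bullet> (z::real^'m)"
  by (metis dot_lmul_matrix inner_commute transpose_matrix_vector)

lemma pinv_exists:
  fixes A :: "real^'n^'m"
  assumes inj: "\<And>v. rs S v = v \<Longrightarrow> A *v v = 0 \<Longrightarrow> v = 0"
  defines "M \<equiv> restr_cols A S"
  shows "\<exists>X. M ** X ** M = M \<and> X ** M ** X = X \<and> transpose (M ** X) = M ** X \<and> transpose (X ** M) = X ** M"
proof -
  define D :: "real^'n^'n" where "D = (\<chi> i j. if i = j \<and> i \<notin> S then 1 else 0)"
  define G where "G = transpose M ** M + D"
  have Dv: "(D *v v) $ j = (if j \<in> S then 0 else v $ j)" for v j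
  proof -
    have "(\<Sum>i\<in>UNIV. (if j = i \<and> j \<notin> S then 1 else 0) * v $ i) = (\<Sum>i\<in>UNIV. if i = j then (if j \<in> S then 0 else v $ j) else 0)"
      by (rule sum.cong) auto
    then show ?thesis unfolding D_def matrix_vector_mult_def by simp
  qed
  have Drs: "D *v rs S v = 0" for v
    by (simp add: vec_eq_iff Dv rs_def)
  have Gv: "G *v v = transpose M *v (M *v v) + D *v v" for v
    by (simp add: G_def matrix_vector_mult_add_rdistrib matrix_vector_mul_assoc)
  have Gj: "j \<notin> S \<Longrightarrow> (G *v v) $ j = v $ j" for v j
    by (simp add: Gv Dv restr_tmv M_def del: transpose_matrix_vector)
  have Ginj: "\<forall>v. G *v v = 0 \<longrightarrow> v = 0"
  proof (intro allI impI)
    fix v assume G0: "G *v v = 0"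
    have rv: "rs S v = v"
      using Gj[of _ v] G0 by (auto simp: rs_def vec_eq_iff)
    then have "D *v v = 0" using Drs by metis
    then have "transpose M *v (M *v v) = 0" using G0 Gv by simp
    then have "(M *v v) \<bullet> (M *v v) = 0" by (metis inner_transpose inner_zero_right)
    then have "A *v v = 0" by (simp add: M_def restr_mv rv)
    then show "v = 0" using inj rv by blast
  qed
  then obtain B where BG: "B ** G = mat 1"
    using matrix_left_invertible_ker[of G] by blast
  then have GB: "G ** B = mat 1" using matrix_left_right_inverse by blast
  have Gt: "transpose G = G"
  proof -
    have "transpose D = D" by (auto simp: D_def transpose_def vec_eq_iff)
    moreover have "transpose (transpose M ** M) = transpose M ** M" by (simp add: matrix_transpose_mul)
    moreover have "transpose (X + Y) = transpose X + transpose Y" for X Y :: "real^'n^'n"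
      by (simp add: transpose_def vec_eq_iff)
    ultimately show ?thesis by (simp add: G_def)
  qed
  have Bt: "transpose B = B"
  proof -
    have "transpose B ** G = mat 1"
      by (metis GB Gt matrix_transpose_mul transpose_mat)
    then have "transpose B = transpose B ** (G ** B)" using GB by simp
    also have "\<dots> = B" by (metis \<open>transpose B ** G = mat 1\<close> matrix_mul_assoc matrix_mul_lid)
    finally show ?thesis .
  qed
  have BGv: "B *v (G *v v) = v" for v
    by (simp add: matrix_vector_mul_assoc BG)
  have GBv: "G *v (B *v v) = v" for v
    by (simp add: matrix_vector_mul_assoc GB)
  have K1: "B *v (transpose M *v (M *v v)) = rs S v" for v
  proof -
    have "G *v rs S v = transpose M *v (M *v v)"
      by (simp add: Gv Drs M_def restr_mv del: transpose_matrix_vector)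
    then show ?thesis using BGv by metis
  qed
  have K2: "rs S (B *v (transpose M *v w)) = B *v (transpose M *v w)" for w
  proof -
    let ?z = "B *v (transpose M *v w)"
    have "?z $ j = 0" if "j \<notin> S" for j
    proof -
      have "(G *v ?z) $ j = (transpose M *v w) $ j" using GBv by simp
      then show ?thesis using Gj[OF that] that by (simp add: M_def restr_tmv del: transpose_matrix_vector)
    qed
    then show ?thesis by (auto simp: rs_def vec_eq_iff)
  qed
  define X where "X = B ** transpose M"
  define P :: "real^'n^'n" where "P = (\<chi> i j. if i = j \<and> i \<in> S then 1 else 0)"
  have Pv: "P *v v = rs S v" for v
  proof -
    have "(\<Sum>i\<in>UNIV. (if j = i \<and> j \<in> S then 1 else 0) * v $ i) = (\<Sum>i\<in>UNIV. if i = j then (if j \<in> S then v $ j else 0) else 0)" for j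
      by (rule sum.cong) auto
    then show ?thesis unfolding P_def matrix_vector_mult_def rs_def by (simp add: vec_eq_iff)
  qed
  have Mrs: "M *v rs S v = M *v v" for v by (simp add: M_def restr_mv)
  have c1: "M ** X ** M = M"
    by (simp add: matrix_eq X_def K1 Mrs flip: matrix_vector_mul_assoc del: transpose_matrix_vector)
  have c2: "X ** M ** X = X"
    by (simp add: matrix_eq X_def K1 K2 flip: matrix_vector_mul_assoc del: transpose_matrix_vector)
  have c4: "X ** M = P"
    by (simp add: matrix_eq X_def K1 Pv flip: matrix_vector_mul_assoc del: transpose_matrix_vector)
  have "transpose P = P" by (auto simp: P_def transpose_def vec_eq_iff)
  with c4 have c4': "transpose (X ** M) = X ** M" by simp
  have c3: "transpose (M ** X) = M ** X"
    by (simp add: X_def matrix_transpose_mul Bt matrix_mul_assoc)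
  show ?thesis using c1 c2 c3 c4' by blast
qed

lemma pinv_props:
  fixes A :: "real^'n^'m"
  assumes inj: "\<And>v. rs S v = v \<Longrightarrow> A *v v = 0 \<Longrightarrow> v = 0"
  defines "M \<equiv> restr_cols A S"
  shows "M ** pinv M ** M = M \<and> pinv M ** M ** pinv M = pinv M \<and> transpose (M ** pinv M) = M ** pinv M \<and> transpose (pinv M ** M) = pinv M ** M"
proof -
  obtain X where X: "M ** X ** M = M \<and> X ** M ** X = X \<and> transpose (M ** X) = M ** X \<and> transpose (X ** M) = X ** M"
    using pinv_exists[OF inj] M_def by blast
  have "pinv M = X" unfolding pinv_def
    by (rule the_equality) (use X pinv_uniq in blast)+
  then show ?thesis using X by simp
qed

lemma pinv_vec:
  fixes A :: "real^'n^'m" and y :: "real^'m"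
  assumes inj: "\<And>v. rs S v = v \<Longrightarrow> A *v v = 0 \<Longrightarrow> v = 0"
  defines "x \<equiv> pinv (restr_cols A S) *v y"
  shows "rs S x = x" and "\<And>j. j \<in> S \<Longrightarrow> (transpose A *v (A *v x - y)) $ j = 0"
proof -
  define M where "M = restr_cols A S"
  define X where "X = pinv M"
  have P: "M ** X ** M = M" "X ** M ** X = X" "transpose (M ** X) = M ** X" "transpose (X ** M) = X ** M"
    using pinv_props[OF inj] unfolding M_def X_def by auto
  have "x = X ** M ** X *v y" using P(2) by (simp add: x_def X_def M_def)
  also have "\<dots> = transpose (X ** M) *v (X *v y)" using P(4) by (simp add: matrix_vector_mul_assoc)
  also have "\<dots> = transpose M *v (transpose X *v (X *v y))"
    by (simp add: matrix_transpose_mul matrix_vector_mul_assoc matrix_mul_assoc del: transpose_matrix_vector)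
  finally have xe: "x = transpose M *v (transpose X *v (X *v y))" .
  show "rs S x = x"
    by (subst (1 2) xe) (auto simp: rs_def vec_eq_iff M_def restr_tmv simp del: transpose_matrix_vector)
  have "transpose M ** M ** X = transpose M"
  proof -
    have "transpose M ** M ** X = transpose M ** transpose (M ** X)" using P(3) by (simp add: matrix_mul_assoc)
    also have "\<dots> = transpose (M ** X ** M)" by (simp add: matrix_transpose_mul matrix_mul_assoc)
    finally show ?thesis using P(1) by simp
  qed
  then have ne: "transpose M *v (M *v x) = transpose M *v y"
    by (metis x_def M_def X_def matrix_vector_mul_assoc)
  have Mx: "M *v x = A *v x" using \<open>rs S x = x\<close> by (metis M_def restr_mv)
  fix j assume j: "j \<in> S"
  have "(transpose M *v (M *v x)) $ j = (transpose M *v y) $ j" using ne by simp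
  then show "(transpose A *v (A *v x - y)) $ j = 0"
    using j Mx by (simp add: M_def restr_tmv matrix_vector_mult_diff_distrib del: transpose_matrix_vector)
qed



definition ricset :: "real^'n^'m \<Rightarrow> nat \<Rightarrow> real set" where
  "ricset A l = {\<delta>. \<delta> \<ge> 0 \<and> (\<forall>x::real^'n. card (supp x) \<le> l \<longrightarrow>
       (1 - \<delta>) * (norm x)^2 \<le> (norm (A *v x))^2 \<and>
       (norm (A *v x))^2 \<le> (1 + \<delta>) * (norm x)^2)}"

lemma ric_eq: "ric A l = Inf (ricset A l)"
  by (simp add: ric_def ricset_def)

lemma ricset_ne:
  fixes A :: "real^'n^'m"
  shows "ricset A l \<noteq> {}"
proof -
  obtain K where K: "\<And>x. norm (A *v x) \<le> norm x * K" "K > 0"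
    using bounded_linear.pos_bounded[OF matrix_vector_mul_bounded_linear[of A]] by blast
  have "1 + K^2 \<in> ricset A l"
    unfolding ricset_def
  proof (intro CollectI conjI allI impI)
    fix x :: "real^'n"
    have "(1 - (1 + K^2)) * (norm x)^2 \<le> 0" by (simp add: mult_nonpos_nonneg)
    then show "(1 - (1 + K^2)) * (norm x)^2 \<le> (norm (A *v x))^2" by (meson order_trans zero_le_power2)
    have "(norm (A *v x))^2 \<le> (norm x * K)^2" using K(1)[of x] by (simp add: power_mono)
    also have "\<dots> = K^2 * (norm x)^2" by (simp add: power_mult_distrib)
    also have "\<dots> \<le> (1 + (1 + K^2)) * (norm x)^2" by (intro mult_right_mono) auto
    finally show "(norm (A *v x))^2 \<le> (1 + (1 + K^2)) * (norm x)^2" .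
  qed simp
  then show ?thesis by blast
qed

lemma ricset_bdd:
  fixes A :: "real^'n^'m"
  shows "bdd_below (ricset A l)"
  unfolding ricset_def bdd_below_def by auto

lemma ric_nonneg:
  fixes A :: "real^'n^'m"
  shows "0 \<le> ric A l"
  unfolding ric_eq using ricset_ne by (rule cInf_greatest) (auto simp: ricset_def)

lemma ric_bounds:
  fixes A :: "real^'n^'m"
  assumes "card (supp x) \<le> l"
  shows "(1 - ric A l) * (norm x)^2 \<le> (norm (A *v x))^2"
    and "(norm (A *v x))^2 \<le> (1 + ric A l) * (norm x)^2"
proof -
  have both: "(1 - ric A l) * (norm x)^2 \<le> (norm (A *v x))^2 \<and> (norm (A *v x))^2 \<le> (1 + ric A l) * (norm x)^2"
  proof (cases "x = 0")
    case True then show ?thesis by simp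
  next
    case False
    define n2 where "n2 = (norm x)^2"
    have n2: "n2 > 0" using False by (simp add: n2_def)
    have "1 - (norm (A *v x))^2 / n2 \<le> ric A l"
      unfolding ric_eq using ricset_ne
    proof (rule cInf_greatest)
      fix d assume "d \<in> ricset A l"
      then have "(1 - d) * n2 \<le> (norm (A *v x))^2" using assms by (auto simp: ricset_def n2_def)
      then show "1 - (norm (A *v x))^2 / n2 \<le> d" using n2 by (simp add: field_simps)
    qed
    moreover have "(norm (A *v x))^2 / n2 - 1 \<le> ric A l"
      unfolding ric_eq using ricset_ne
    proof (rule cInf_greatest)
      fix d assume "d \<in> ricset A l"
      then have "(norm (A *v x))^2 \<le> (1 + d) * n2" using assms by (auto simp: ricset_def n2_def)
      then show "(norm (A *v x))^2 / n2 - 1 \<le> d" using n2 by (simp add: field_simps)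
    qed
    ultimately have "1 - ric A l \<le> (norm (A *v x))^2 / n2" "(norm (A *v x))^2 / n2 \<le> 1 + ric A l"
      by linarith+
    then have "(1 - ric A l) * n2 \<le> (norm (A *v x))^2" "(norm (A *v x))^2 \<le> (1 + ric A l) * n2"
      using n2 by (simp_all add: pos_le_divide_eq pos_divide_le_eq)
    then show ?thesis unfolding n2_def by simp
  qed
  then show "(1 - ric A l) * (norm x)^2 \<le> (norm (A *v x))^2" by blast
  from both show "(norm (A *v x))^2 \<le> (1 + ric A l) * (norm x)^2" by blast
qed

lemma ric_mono:
  fixes A :: "real^'n^'m"
  assumes "l \<le> l'"
  shows "ric A l \<le> ric A l'"
  unfolding ric_eq
proof (rule cInf_superset_mono[OF ricset_ne ricset_bdd])
  show "ricset A l' \<subseteq> ricset A l" using assms unfolding ricset_def by auto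
qed

lemma supp_subset_card:
  fixes x :: "real^'n"
  assumes "supp x \<subseteq> T" "card T \<le> l"
  shows "card (supp x) \<le> l"
  using card_mono[OF finite assms(1)] assms(2) by linarith

lemma norm_sq_add: "(norm (a + b))^2 = (norm a)^2 + 2 * (a \<bullet> b) + (norm (b::'a::real_inner))^2"
  by (simp add: power2_norm_eq_inner inner_add_left inner_add_right inner_commute)

lemma norm_sq_diff: "(norm (a - b))^2 = (norm a)^2 - 2 * (a \<bullet> b) + (norm (b::'a::real_inner))^2"
  by (simp add: power2_norm_eq_inner inner_diff_left inner_diff_right inner_commute)

lemma ric_inner:
  fixes A :: "real^'n^'m"
  assumes disj: "supp u \<inter> supp v = {}" and cd: "card (supp u \<union> supp v) \<le> l"
  shows "\<bar>(A *v u) \<bullet> (A *v v)\<bar> \<le> ric A l * norm u * norm v"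
proof (cases "u = 0 \<or> v = 0")
  case True then show ?thesis using ric_nonneg[of A l] by auto
next
  case False
  define nu where "nu = norm u"
  define nv where "nv = norm v"
  have nu: "nu > 0" and nv: "nv > 0" using False by (auto simp: nu_def nv_def)
  define u' where "u' = (1/nu) *\<^sub>R u"
  define v' where "v' = (1/nv) *\<^sub>R v"
  have u'n: "norm u' = 1" using nu by (simp add: u'_def nu_def)
  have v'n: "norm v' = 1" using nv by (simp add: v'_def nv_def)
  have su: "supp u' = supp u" using nu by (simp add: supp_def u'_def)
  have sv: "supp v' = supp v" using nv by (simp add: supp_def v'_def)
  have uv0: "u' \<bullet> v' = 0"
  proof -
    have "u' $ i * v' $ i = 0" for i using disj su sv by (auto simp: supp_def)
    then show ?thesis unfolding inner_vec_def inner_real_def by (metis (no_types, lifting) sum.neutral)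
  qed
  have c1: "card (supp (u' + v')) \<le> l"
    by (rule supp_subset_card[OF _ cd]) (auto simp: supp_def u'_def v'_def)
  have c2: "card (supp (u' - v')) \<le> l"
    by (rule supp_subset_card[OF _ cd]) (auto simp: supp_def u'_def v'_def)
  have np: "(norm (u' + v'))^2 = 2" using u'n v'n uv0 by (simp add: norm_sq_add)
  have nm: "(norm (u' - v'))^2 = 2" using u'n v'n uv0 by (simp add: norm_sq_diff)
  define p where "p = (A *v u') \<bullet> (A *v v')"
  have e1: "(norm (A *v (u' + v')))^2 = (norm (A *v u'))^2 + 2 * p + (norm (A *v v'))^2"
    by (simp add: matrix_vector_right_distrib norm_sq_add p_def)
  have e2: "(norm (A *v (u' - v')))^2 = (norm (A *v u'))^2 - 2 * p + (norm (A *v v'))^2"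
    by (simp add: matrix_vector_mult_diff_distrib norm_sq_diff p_def)
  have b1: "(1 - ric A l) * 2 \<le> (norm (A *v (u' + v')))^2" "(norm (A *v (u' + v')))^2 \<le> (1 + ric A l) * 2"
    using ric_bounds[OF c1, of A] np by auto
  have b2: "(1 - ric A l) * 2 \<le> (norm (A *v (u' - v')))^2" "(norm (A *v (u' - v')))^2 \<le> (1 + ric A l) * 2"
    using ric_bounds[OF c2, of A] nm by auto
  have b1': "2 - 2 * ric A l \<le> (norm (A *v (u' + v')))^2" "(norm (A *v (u' + v')))^2 \<le> 2 + 2 * ric A l"
    using b1 by (simp_all add: algebra_simps)
  have b2': "2 - 2 * ric A l \<le> (norm (A *v (u' - v')))^2" "(norm (A *v (u' - v')))^2 \<le> 2 + 2 * ric A l"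
    using b2 by (simp_all add: algebra_simps)
  have pb: "\<bar>p\<bar> \<le> ric A l" using b1' b2' e1 e2 by linarith
  have uu: "u = nu *\<^sub>R u'" using nu by (simp add: u'_def)
  have vv: "v = nv *\<^sub>R v'" using nv by (simp add: v'_def)
  have "(A *v u) \<bullet> (A *v v) = nu * nv * p"
    by (subst uu, subst vv) (simp add: matrix_vector_mult_scaleR p_def)
  then have "\<bar>(A *v u) \<bullet> (A *v v)\<bar> = nu * nv * \<bar>p\<bar>" using nu nv by (simp add: abs_mult)
  also have "\<dots> \<le> nu * nv * ric A l" using pb nu nv by simp
  finally show ?thesis by (simp add: nu_def nv_def mult_ac)
qed



lemma card_largest: "card (largest k (v::real^('n::{finite,linorder}))) \<le> k"
proof -
  define B where "B i = {j. \<bar>v$j\<bar> > \<bar>v$i\<bar> \<or> (\<bar>v$j\<bar> = \<bar>v$i\<bar> \<and> j > i)}" for i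
  have lk: "largest k v = {i. card (B i) < k}" by (simp add: largest_def B_def)
  have lt: "card (B j) < card (B i)" if "j \<in> B i" for i j
  proof (rule psubset_card_mono)
    show "B j \<subset> B i"
    proof
      show "B j \<subseteq> B i" using that by (auto simp: B_def)
      show "B j \<noteq> B i" using that by (auto simp: B_def)
    qed
  qed simp
  have inj: "inj (\<lambda>i. card (B i))"
  proof (rule injI)
    fix i j assume eq: "card (B i) = card (B j)"
    show "i = j"
    proof (rule ccontr)
      assume "i \<noteq> j"
      then have "j \<in> B i \<or> i \<in> B j" by (auto simp: B_def)
      then show False using lt eq by fastforce
    qed
  qed
  have "card (largest k v) \<le> card {..<k}"
    unfolding lk by (rule card_inj_on_le[where f = "\<lambda>i. card (B i)"]) (use inj in \<open>auto simp: inj_on_def\<close>)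
  then show ?thesis by simp
qed

lemma not_largest:
  fixes v :: "real^('n::{finite,linorder})"
  assumes "i \<notin> largest k v" "i \<in> P" "card P \<le> k"
  shows "\<exists>j. j \<notin> P \<and> \<bar>v$i\<bar> \<le> \<bar>v$j\<bar>"
proof (rule ccontr)
  assume H: "\<not> ?thesis"
  define B where "B = {j. \<bar>v$j\<bar> > \<bar>v$i\<bar> \<or> (\<bar>v$j\<bar> = \<bar>v$i\<bar> \<and> j > i)}"
  have "card B \<ge> k" using assms(1) by (simp add: largest_def B_def)
  moreover have "B \<subseteq> P - {i}" using H by (auto simp: B_def)
  then have "card B \<le> card (P - {i})" by (intro card_mono) auto
  moreover have "card (P - {i}) < card P" using assms(2) by (metis card_Diff1_less finite)
  ultimately show False using assms(3) by linarith
qed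



lemma tA_comp: "(transpose A *v z) $ i = column i A \<bullet> (z::real^'m)"
  by (simp add: transpose_def matrix_vector_mult_def column_def inner_vec_def mult.commute del: transpose_matrix_vector)

lemma supp_axis: "supp (axis i (1::real)) = {i}"
  by (auto simp: supp_def axis_def)


lemma grad_bound:
  fixes A :: "real^'n^'m" and xs x :: "real^'n"
  assumes cT: "card T \<le> k" and rsx: "rs T x = x"
    and ne: "\<And>j. j \<in> T \<Longrightarrow> (transpose A *v (A *v x - A *v xs)) $ j = 0"
    and cs: "card (supp xs) \<le> k" and col: "\<And>i. norm (column i A) = 1"
    and d: "ric A k < 1" and iT: "i \<notin> T"
  shows "\<bar>(transpose A *v (A *v x - A *v xs)) $ i + xs $ i\<bar> \<le> alpha_RIP A k * norm xs"
proof -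
  define w where "w = x - xs"
  have Aw: "A *v x - A *v xs = A *v w" by (simp add: w_def matrix_vector_mult_diff_distrib)
  have x0: "x $ j = 0" if "j \<notin> T" for j 
  proof -
    have "x $ j = (rs T x) $ j" using rsx by simp
    then show ?thesis using that by (simp add: rs_def)
  qed
  define wT where "wT = rs T w"
  define wC where "wC = w - wT"
  have wCj: "wC $ j = (if j \<in> T then 0 else - xs $ j)" for j
    using x0[of j] by (simp add: wC_def wT_def rs_def w_def)
  have nwC: "norm wC \<le> norm xs"
    by (rule norm_le_componentwise_cart) (simp add: wCj)
  have sT: "supp wT \<subseteq> T" by (auto simp: supp_def wT_def rs_def)
  have sC: "supp wC \<subseteq> supp xs - T" by (auto simp: supp_def wCj split: if_splits)
  have cUn: "card (T \<union> supp xs) \<le> 2 * k"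
    using card_Un_le[of T "supp xs"] cT cs by linarith
  have orth: "(A *v wT) \<bullet> (A *v w) = 0"
  proof -
    have "(A *v wT) \<bullet> (A *v w) = wT \<bullet> (transpose A *v (A *v w))"
      by (simp add: inner_transpose del: transpose_matrix_vector)
    also have "\<dots> = 0"
      unfolding inner_vec_def inner_real_def
    proof (rule sum.neutral, intro ballI)
      fix j
      show "wT $ j * (transpose A *v (A *v w)) $ j = 0"
        using ne[of j] by (cases "j \<in> T") (simp_all add: wT_def rs_def Aw del: transpose_matrix_vector)
    qed
    finally show ?thesis .
  qed
  have wsplit: "w = wT + wC" by (simp add: wC_def)
  have "(norm (A *v wT))^2 = (A *v wT) \<bullet> (A *v wT)" by (simp add: power2_norm_eq_inner)
  also have "\<dots> = (A *v wT) \<bullet> (A *v w) - (A *v wT) \<bullet> (A *v wC)"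
    by (simp add: wC_def matrix_vector_mult_diff_distrib inner_diff_right)
  also have "\<dots> = - ((A *v wT) \<bullet> (A *v wC))" using orth by simp
  also have "\<dots> \<le> \<bar>(A *v wT) \<bullet> (A *v wC)\<bar>" by simp
  also have "\<dots> \<le> ric A (2*k) * norm wT * norm wC"
  proof (rule ric_inner)
    show "supp wT \<inter> supp wC = {}" using sT sC by blast
    show "card (supp wT \<union> supp wC) \<le> 2 * k"
      by (rule le_trans[OF card_mono cUn]) (use sT sC in auto)
  qed
  finally have up: "(norm (A *v wT))^2 \<le> ric A (2*k) * norm wT * norm xs"
    using nwC ric_nonneg[of A "2*k"] by (smt (verit) mult_left_mono norm_ge_zero mult_nonneg_nonneg)
  have lo: "(1 - ric A k) * (norm wT)^2 \<le> (norm (A *v wT))^2"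
    by (rule ric_bounds(1)) (rule supp_subset_card[OF sT cT])
  have dk: "1 - ric A k > 0" using d by simp
  have nwT: "norm wT \<le> ric A (2*k) / (1 - ric A k) * norm xs"
  proof (cases "norm wT = 0")
    case True then show ?thesis using dk ric_nonneg[of A "2*k"] by simp
  next
    case False
    then have p: "norm wT > 0" by simp
    have "(1 - ric A k) * norm wT * norm wT \<le> ric A (2*k) * norm xs * norm wT"
      using lo up by (simp add: power2_eq_square mult_ac)
    then have "(1 - ric A k) * norm wT \<le> ric A (2*k) * norm xs"
      using p by simp
    then show ?thesis using dk by (simp add: field_simps)
  qed
  have nw: "norm w \<le> (1 + ric A (2*k) / (1 - ric A k)) * norm xs"
  proof -
    have "norm w \<le> norm wT + norm wC" using wsplit norm_triangle_ineq by metis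
    also have "\<dots> \<le> ric A (2*k) / (1 - ric A k) * norm xs + norm xs" using nwT nwC by simp
    finally show ?thesis by (simp add: algebra_simps)
  qed
  define w' where "w' = w - (w $ i) *\<^sub>R axis i 1"
  have wi: "w $ i = - xs $ i" using x0[OF iT] by (simp add: w_def)
  have w'j: "w' $ j = (if j = i then 0 else w $ j)" for j
    by (simp add: w'_def axis_def)
  have nw': "norm w' \<le> norm w"
    by (rule norm_le_componentwise_cart) (simp add: w'j)
  have sw: "supp w \<subseteq> T \<union> supp xs"
    using x0 by (auto simp: supp_def w_def)
  have sw': "supp w' \<subseteq> (T \<union> supp xs) - {i}"
    using sw by (auto simp: supp_def w'j split: if_splits)
  have Awe: "A *v w = A *v w' + (w $ i) *\<^sub>R column i A"
    by (simp add: w'_def matrix_vector_mult_diff_distrib matrix_vector_mult_scaleR matrix_vector_mult_basis)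
  have cc: "column i A \<bullet> column i A = 1"
    using col[of i] by (simp add: power2_norm_eq_inner[symmetric])
  have "(transpose A *v (A *v x - A *v xs)) $ i = column i A \<bullet> (A *v w')  + w $ i"
    by (simp add: Aw tA_comp Awe inner_add_right cc del: transpose_matrix_vector)
  then have eq: "(transpose A *v (A *v x - A *v xs)) $ i + xs $ i = (A *v axis i 1) \<bullet> (A *v w')"
    by (simp add: wi matrix_vector_mult_basis)
  have "\<bar>(A *v axis i 1) \<bullet> (A *v w')\<bar> \<le> ric A (2*k+1) * norm (axis i (1::real)) * norm w'"
  proof (rule ric_inner)
    show "supp (axis i 1) \<inter> supp w' = {}" using sw' by (auto simp: supp_axis)
    have "card (insert i (T \<union> supp xs)) \<le> 2*k+1"
      using card_insert_le_m1 cUn by (metis Suc_eq_plus1 card_insert_if finite le_SucI Suc_le_mono)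
    moreover have "supp (axis i (1::real)) \<union> supp w' \<subseteq> insert i (T \<union> supp xs)" using sw' by (auto simp: supp_axis)
    ultimately show "card (supp (axis i 1) \<union> supp w') \<le> 2 * k + 1"
      using card_mono[OF finite] le_trans by blast
  qed
  also have "\<dots> \<le> ric A (2*k+1) * norm w" using nw' ric_nonneg[of A "2*k+1"] by (simp add: mult_left_mono)
  also have "\<dots> \<le> ric A (2*k+1) * ((1 + ric A (2*k) / (1 - ric A k)) * norm xs)"
    using nw ric_nonneg[of A "2*k+1"] by (simp add: mult_left_mono)
  also have "\<dots> = alpha_RIP A k * norm xs" by (simp add: alpha_RIP_def)
  finally show ?thesis using eq by simp
qed



lemma inj_card:
  fixes A :: "real^'n^'m"
  assumes "card T \<le> l" "ric A l < 1" "rs T v = v" "A *v v = 0"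
  shows "v = 0"
proof -
  have "v $ j = 0" if "j \<notin> T" for j
  proof -
    have "v $ j = (rs T v) $ j" using assms(3) by simp
    then show ?thesis using that by (simp add: rs_def)
  qed
  then have "supp v \<subseteq> T" by (auto simp: supp_def)
  then have "card (supp v) \<le> l" using supp_subset_card assms(1) by blast
  from ric_bounds(1)[OF this, of A] assms(2,4) have "(1 - ric A l) * (norm v)^2 \<le> 0" by simp
  moreover have "1 - ric A l > 0" using assms(2) by simp
  ultimately have "(norm v)^2 \<le> 0" by (simp add: mult_le_0_iff)
  then show ?thesis by simp
qed

lemma sgn_bound:
  fixes x g a :: real
  assumes "\<bar>g + x\<bar> \<le> a"
  shows "sgn x * (- g) \<ge> \<bar>x\<bar> - a"
  using assms by (cases "x > 0"; cases "x < 0") (auto simp: sgn_if abs_if split: if_splits)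



theorem corollary4p2:
  fixes A :: "real^('n::{finite,linorder})^'m" and xs :: "real^('n::{finite,linorder})" and y :: "real^'m"
    and k :: nat and \<beta> :: real
  assumes k_pos: "k > 0"
    and supp_card: "1 \<le> card (supp xs)" "card (supp xs) \<le> k"
    and y_def: "y = A *v xs"
    and rip: "has_RIP A (2*k+1)"
    and col_norm: "\<And>i. norm (column i A) = 1"
    and beta: "0 < \<beta>" "\<beta> < 1"
    and beta_bound: "2 * real k * alpha_RIP A k * norm xs / Min ((\<lambda>i. \<bar>xs$i\<bar>) ` supp xs) \<le> \<beta>"
  shows "gamma_RIP A k * norm (0::real^'m)
           < Min ((\<lambda>i. \<bar>xs$i\<bar>) ` supp xs) / (2 * real k) - alpha_RIP A k * norm xs
         \<and> (\<forall>\<eta> N tb. \<eta> > 0 \<longrightarrow> real N > (real k + 1) / (1 - \<beta>) \<longrightarrow> tb < N \<longrightarrow>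
           (\<forall>t'<N. norm (A *v sea_x A y k \<eta> 0 tb - y) \<le> norm (A *v sea_x A y k \<eta> 0 t' - y)) \<longrightarrow>
           supp xs \<subseteq> sea_S A y k \<eta> 0 tb \<and> sea_x A y k \<eta> 0 tb = xs)"
proof -
  define \<mu> where "\<mu> = Min ((\<lambda>i. \<bar>xs$i\<bar>) ` supp xs)"
  define a where "a = alpha_RIP A k * norm xs"
  have d1: "ric A (2*k+1) < 1" using rip by (simp add: has_RIP_def)
  have dk: "ric A k < 1" using ric_mono[of k "2*k+1" A] d1 by linarith
  have sne: "supp xs \<noteq> {}" using supp_card(1) by auto
  have mu_le: "\<mu> \<le> \<bar>xs$i\<bar>" if "i \<in> supp xs" for i
    unfolding \<mu>_def using that by (intro Min_le) auto
  have mu_pos: "\<mu> > 0"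
  proof -
    have "\<mu> \<in> (\<lambda>i. \<bar>xs$i\<bar>) ` supp xs" unfolding \<mu>_def using sne by (intro Min_in) auto
    then show ?thesis by (auto simp: supp_def)
  qed
  have a_nn: "a \<ge> 0"
    unfolding a_def alpha_RIP_def using ric_nonneg[of A] dk
    by (intro mult_nonneg_nonneg add_nonneg_nonneg divide_nonneg_pos) auto
  have ka: "2 * real k * a \<le> \<beta> * \<mu>"
    using beta_bound mu_pos unfolding a_def \<mu>_def[symmetric] by (simp add: pos_divide_le_eq mult.assoc)
  have ka2: "2 * real k * a < \<mu>" using ka beta mu_pos by (smt (verit) mult_less_cancel_right2)
  have part1: "gamma_RIP A k * norm (0::real^'m) < \<mu> / (2 * real k) - a"
    using ka2 k_pos by (simp add: field_simps)
  have part2: "\<forall>\<eta> N tb. \<eta> > 0 \<longrightarrow> real N > (real k + 1) / (1 - \<beta>) \<longrightarrow> tb < N \<longrightarrow>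
           (\<forall>t'<N. norm (A *v sea_x A y k \<eta> 0 tb - y) \<le> norm (A *v sea_x A y k \<eta> 0 t' - y)) \<longrightarrow>
           supp xs \<subseteq> sea_S A y k \<eta> 0 tb \<and> sea_x A y k \<eta> 0 tb = xs"
  proof (intro allI impI)
    fix \<eta> :: real and N tb :: nat
    assume eta: "\<eta> > 0" and NB: "real N > (real k + 1) / (1 - \<beta>)" and tbN: "tb < N"
      and tbmin: "\<forall>t'<N. norm (A *v sea_x A y k \<eta> 0 tb - y) \<le> norm (A *v sea_x A y k \<eta> 0 t' - y)"
    define X where "X t = sea_X A y k \<eta> 0 t" for t
    define S where "S t = largest k (X t)" for t
    define x where "x t = pinv (restr_cols A (S t)) *v y" for t
    define g where "g t = transpose A *v (A *v x t - y)" for t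
    have Seq: "sea_S A y k \<eta> 0 t = S t" for t by (simp add: sea_S_def S_def X_def)
    have xeq: "sea_x A y k \<eta> 0 t = x t" for t by (simp add: sea_x_def sea_xt_def x_def S_def X_def)
    have X0: "X 0 = 0" by (simp add: X_def)
    have Xsuc: "X (Suc t) $ i = X t $ i - \<eta> * g t $ i" for t i
      by (simp add: X_def g_def x_def S_def sea_xt_def del: transpose_matrix_vector)
    have cS: "card (S t) \<le> k" for t by (simp add: S_def card_largest)
    have cS2: "card (S t) \<le> 2*k+1" for t using cS[of t] by linarith
    have injS: "v = 0" if "rs (S t) v = v" "A *v v = 0" for t v
      using inj_card[OF cS2 d1 that] .
    have F1a: "rs (S t) (x t) = x t" for t
      unfolding x_def by (rule pinv_vec(1)) (use injS in blast)
    have F1b: "g t $ j = 0" if "j \<in> S t" for t j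
      unfolding x_def g_def by (rule pinv_vec(2)) (use injS that in blast)+
    have F2: "\<bar>g t $ i + xs $ i\<bar> \<le> a" if "i \<notin> S t" for t i
      unfolding g_def a_def y_def
      by (rule grad_bound[OF cS F1a _ supp_card(2) col_norm dk that]) (use F1b in \<open>simp add: g_def y_def del: transpose_matrix_vector\<close>)
    define cnt where "cnt i t = (\<Sum>s<t. if i \<in> S s then 0 else 1::real)" for i t
    have cnt0: "cnt i 0 = 0" for i by (simp add: cnt_def)
    have cntS: "cnt i (Suc t) = cnt i t + (if i \<in> S t then 0 else 1)" for i t by (simp add: cnt_def)
    have cnt_nn: "cnt i t \<ge> 0" for i t unfolding cnt_def by (intro sum_nonneg) auto
    have L1: "sgn (xs$i) * X t $ i \<ge> \<eta> * (\<mu> - a) * cnt i t" if iS: "i \<in> supp xs" for i t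
    proof (induction t)
      case 0 then show ?case by (simp add: X0 cnt0)
    next
      case (Suc t)
      have e: "sgn (xs$i) * X (Suc t) $ i = sgn (xs$i) * X t $ i + \<eta> * (sgn (xs$i) * (- g t $ i))"
        by (simp add: Xsuc algebra_simps)
      show ?case
      proof (cases "i \<in> S t")
        case True
        have "sgn (xs$i) * X (Suc t) $ i = sgn (xs$i) * X t $ i" by (simp add: Xsuc F1b[OF True])
        moreover have "cnt i (Suc t) = cnt i t" using True by (simp add: cntS)
        ultimately show ?thesis using Suc.IH by (simp only:)
      next
        case False
        have "sgn (xs$i) * (- g t $ i) \<ge> \<bar>xs$i\<bar> - a" by (rule sgn_bound[OF F2[OF False]])
        then have "sgn (xs$i) * (- g t $ i) \<ge> \<mu> - a" using mu_le[OF iS] by linarith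
        then have "\<eta> * (sgn (xs$i) * (- g t $ i)) \<ge> \<eta> * (\<mu> - a)" using eta by (intro mult_left_mono) auto
        then show ?thesis using Suc e False by (simp add: cntS algebra_simps)
      qed
    qed
    have L2: "\<bar>X t $ i\<bar> \<le> \<eta> * a * t" if iS: "i \<notin> supp xs" for i t
    proof (induction t)
      case 0 then show ?case by (simp add: X0)
    next
      case (Suc t)
      have xi: "xs $ i = 0" using iS by (simp add: supp_def)
      have "\<bar>g t $ i\<bar> \<le> a"
        using F1b[of i t] F2[of i t] xi a_nn by (cases "i \<in> S t") auto
      then have "\<bar>\<eta> * g t $ i\<bar> \<le> \<eta> * a" using eta by (simp add: abs_mult)
      then show ?case using Suc by (simp add: Xsuc algebra_simps)
    qed
    have L3: "(\<mu> - a) * cnt i t \<le> a * t" if iS: "i \<in> supp xs" and iN: "i \<notin> S t" for i t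
    proof -
      obtain j where j: "j \<notin> supp xs" "\<bar>X t $ i\<bar> \<le> \<bar>X t $ j\<bar>"
        using not_largest[of i k "X t" "supp xs"] iN iS supp_card(2) by (auto simp: S_def)
      have "\<eta> * (\<mu> - a) * cnt i t \<le> sgn (xs$i) * X t $ i" by (rule L1[OF iS])
      also have "\<dots> \<le> \<bar>X t $ i\<bar>" by (simp add: sgn_if abs_if)
      also have "\<dots> \<le> \<eta> * a * t" using j L2[OF j(1), of t] by linarith
      finally have "\<eta> * ((\<mu> - a) * cnt i t) \<le> \<eta> * (a * t)" by (simp add: mult_ac)
      then show ?thesis using eta by simp
    qed
    have kr: "real k \<ge> 1" using k_pos by simp
    have a_lt: "a < \<mu>"
    proof -
      have "a \<le> 2 * real k * a" using kr a_nn by (simp add: mult_le_cancel_right1) 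
      then show ?thesis using ka2 by linarith
    qed
    have ma: "\<mu> - a > 0" using a_lt by simp
    have omb: "1 - \<beta> > 0" using beta by simp
    have NB': "real N * (1 - \<beta>) > real k + 1" using NB omb by (simp add: divide_less_eq)
    have N1: "real N \<ge> 1"
    proof (rule ccontr)
      assume "\<not> real N \<ge> 1" then have "N = 0" by simp
      then show False using NB' by simp
    qed
    have L4: "(\<mu> - a) * cnt i T \<le> a * (real N - 1) + (\<mu> - a)" if iS: "i \<in> supp xs" and TN: "T \<le> N" for i T
      using TN
    proof (induction T)
      case 0 then show ?case using a_nn N1 ma by (simp add: cnt0)
    next
      case (Suc T)
      then have TN': "T < N" "T \<le> N" by auto
      show ?case
      proof (cases "i \<in> S T")
        case True then show ?thesis using Suc.IH[OF TN'(2)] by (simp add: cntS)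
      next
        case False
        have "(\<mu> - a) * cnt i T \<le> a * T" by (rule L3[OF iS False])
        also have "\<dots> \<le> a * (real N - 1)" using TN'(1) a_nn by (intro mult_left_mono) auto
        finally show ?thesis using False by (simp add: cntS algebra_simps)
      qed
    qed
    have ex: "\<exists>t0<N. supp xs \<subseteq> S t0"
    proof (rule ccontr)
      assume H: "\<not> ?thesis"
      have inner: "(\<Sum>i\<in>supp xs. (if i \<in> S s then 0 else 1::real)) \<ge> 1" if sN: "s < N" for s
      proof -
        obtain i0 where i0: "i0 \<in> supp xs" "i0 \<notin> S s" using H sN by auto
        have "(if i0 \<in> S s then 0 else 1::real) \<le> (\<Sum>i\<in>supp xs. (if i \<in> S s then 0 else 1::real))"
          by (rule member_le_sum) (use i0 in auto)
        then show ?thesis using i0 by simp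
      qed
      have "(\<Sum>i\<in>supp xs. cnt i N) = (\<Sum>s<N. \<Sum>i\<in>supp xs. (if i \<in> S s then 0 else 1::real))"
        unfolding cnt_def by (rule sum.swap)
      also have "\<dots> \<ge> (\<Sum>s<N. 1)" by (rule sum_mono) (use inner in auto)
      finally have s1: "(\<Sum>i\<in>supp xs. cnt i N) \<ge> real N" by simp
      have "(\<mu> - a) * (\<Sum>i\<in>supp xs. cnt i N) = (\<Sum>i\<in>supp xs. (\<mu> - a) * cnt i N)"
        by (simp add: sum_distrib_left)
      also have "\<dots> \<le> real (card (supp xs)) * (a * (real N - 1) + (\<mu> - a))"
        by (rule sum_bounded_above) (use L4 in auto)
      also have "\<dots> \<le> real k * (a * (real N - 1) + (\<mu> - a))"
        using supp_card(2) a_nn N1 ma by (intro mult_right_mono) auto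
      finally have s2: "(\<mu> - a) * (\<Sum>i\<in>supp xs. cnt i N) \<le> real k * (a * (real N - 1) + (\<mu> - a))" .
      have s3: "(\<mu> - a) * real N \<le> real k * (a * (real N - 1) + (\<mu> - a))"
        using s2 s1 ma by (smt (verit) mult_left_mono)
      define K where "K = real k"
      define R where "R = real N"
      have s4: "\<mu> * R \<le> (K + 1) * a * R + K * \<mu>"
      proof -
        have "(\<mu> - a) * R \<le> K * a * R - 2 * K * a + K * \<mu>" using s3 by (simp add: K_def R_def algebra_simps)
        moreover have "K * a \<ge> 0" using a_nn by (simp add: K_def)
        ultimately show ?thesis by (simp add: algebra_simps)
      qed
      have "(K + 1) * a \<le> \<beta> * \<mu>" using ka kr a_nn unfolding K_def
        by (smt (verit) mult_right_mono)
      then have "(K + 1) * a * R \<le> \<beta> * \<mu> * R" using N1 by (intro mult_right_mono) (auto simp: R_def)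
      with s4 have "\<mu> * (R * (1 - \<beta>)) \<le> \<mu> * K" by (simp add: algebra_simps)
      then have "R * (1 - \<beta>) \<le> K" using mu_pos by simp
      then show False using NB' by (simp add: K_def R_def)
    qed
    then obtain t0 where t0: "t0 < N" "supp xs \<subseteq> S t0" by blast
    have xs0: "xs $ j = 0" if "j \<notin> supp xs" for j using that by (simp add: supp_def)
    have xoff: "x t $ j = 0" if "j \<notin> S t" for t j
    proof -
      have "x t $ j = rs (S t) (x t) $ j" using F1a by simp
      then show ?thesis using that by (simp add: rs_def)
    qed
    have xt0: "x t0 = xs"
    proof -
      define w where "w = x t0 - xs"
      have rw: "rs (S t0) w = w" using xoff[of _ t0] xs0 t0(2) by (auto simp: rs_def w_def vec_eq_iff)
      have Aw: "A *v w = A *v x t0 - y" by (simp add: w_def y_def matrix_vector_mult_diff_distrib)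
      have "(A *v w) \<bullet> (A *v w) = w \<bullet> g t0"
        by (simp add: inner_transpose g_def Aw del: transpose_matrix_vector)
      also have "\<dots> = 0"
        unfolding inner_vec_def inner_real_def
      proof (rule sum.neutral, intro ballI)
        fix j
        show "w $ j * g t0 $ j = 0"
        proof (cases "j \<in> S t0")
          case True then show ?thesis using F1b by simp
        next
          case False
          have "w $ j = rs (S t0) w $ j" using rw by simp
          then have "w $ j = 0" using False by (simp add: rs_def)
          then show ?thesis by simp
        qed
      qed
      finally have "A *v w = 0" by simp
      then have "w = 0" using injS[OF rw] by simp
      then show ?thesis by (simp add: w_def)
    qed
    have "norm (A *v x tb - y) \<le> norm (A *v x t0 - y)" using tbmin t0(1) unfolding xeq by blast
    also have "\<dots> = 0" using xt0 y_def by simp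
    finally have Axtb: "A *v x tb = y" by simp
    have xtb: "x tb = xs"
    proof -
      define w where "w = x tb - xs"
      define T where "T = S tb \<union> supp xs"
      have cT: "card T \<le> 2*k+1" using card_Un_le[of "S tb" "supp xs"] cS[of tb] supp_card(2) unfolding T_def by linarith
      have rw: "rs T w = w" using xoff[of _ tb] xs0 by (auto simp: rs_def w_def vec_eq_iff T_def)
      have "A *v w = 0" using Axtb y_def by (simp add: w_def matrix_vector_mult_diff_distrib)
      then have "w = 0" using inj_card[OF cT d1 rw] by simp
      then show ?thesis by (simp add: w_def)
    qed
    have "supp xs \<subseteq> S tb"
    proof
      fix j assume "j \<in> supp xs"
      then have "x tb $ j \<noteq> 0" using xtb by (simp add: supp_def)
      then show "j \<in> S tb" using xoff by blast
    qed
    then show "supp xs \<subseteq> sea_S A y k \<eta> 0 tb \<and> sea_x A y k \<eta> 0 tb = xs" using xtb by (simp add: Seq xeq)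
  qed
  show ?thesis using part1 part2 unfolding \<mu>_def a_def by blast
qed

end
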